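(* For $\lambda>0$ let $\eta = \eta(\lambda) = (\lambda-1)\sqrt{\frac{2 (\lambda-1-\ln \lambda)}{(\lambda-1)^{2}}}$ (principal branch of the root). Let $\gamma_j$ be the Stirling coefficients $\gamma_{j} = \frac{(-1)^{j}}{2^{j} \, j!} \Big[ \frac{d^{2j}}{dx^{2j}} \Big( \frac{1}{2}\frac{x^{2}}{x-\ln(1+x)} \Big)^{j+\frac{1}{2}} \Big]_{x=0}$, and define functions $c_j(\eta)$ by $c_{0}(\eta) = \frac{1}{\lambda-1}-\frac{1}{\eta}$ and $c_{j}(\eta) = \frac{1}{\eta} \frac{d}{d\eta}c_{j-1}(\eta) + \frac{\gamma_{j}}{\lambda-1}$ for $j \geq 1$ (with $\lambda$ regarded as a function of $\eta$). Then for every $j \geq 0$, $$c_j(\eta) = \varphi_j(\lambda) - S(\varphi_j(\lambda)), \qquad \varphi_j(\lambda) := \frac{(-1)^{j+1} (2j-1)!!}{\eta^{2j+1}},$$ where $S(\varphi_j(\lambda))$ denotes the singular part of $\varphi_j$ at $\lambda = 1$, i.e. the sum of the terms with negative powers of $\lambda-1$ in the Laurent expansion of $\varphi_j(\lambda)$ at $\lambda=1$.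
   Context: $(2j-1)!!=1\cdot3\cdots(2j-1)$, with $(-1)!!=1$. The map $\lambda\mapsto\eta$ is real-analytic and increasing with $\eta(1)=0$, $\eta'(1)=1$, so $\eta^{-(2j+1)}$ has a pole of order $2j+1$ at $\lambda=1$. (These $c_j$ are the coefficients in Temme's uniform asymptotic expansion $R_a(\eta)\sim \frac{e^{-a\eta^2/2}}{\sqrt{2\pi a}}\sum_j c_j(\eta)a^{-j}$ of the remainder in $\gamma(a,z)/\Gamma(a)=\frac12\mathrm{erfc}(-\eta\sqrt{a/2})-R_a(\eta)$, $\lambda=z/a$.) *)

theory Defs
  imports "HOL-Complex_Analysis.Complex_Analysis"
begin

text \<open>eta(lambda) for real lambda > 0 (at lambda = 1 the formula gives 0, the correct value).\<close>
definition eta :: "real \<Rightarrow> real" where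
  "eta l = (l - 1) * sqrt (2 * (l - 1 - ln l) / (l - 1)^2)"

text \<open>The same formula over the complex numbers (principal branches of Ln and csqrt);
  it agrees with eta on the positive reals and is used to form the Laurent expansion at 1.\<close>
definition eta_c :: "complex \<Rightarrow> complex" where
  "eta_c z = (z - 1) * csqrt (2 * (z - 1 - Ln z) / (z - 1)^2)"

definition lam :: "real \<Rightarrow> real" where
  "lam e = inv_into {0<..} eta e"

text \<open>(2j-1)!! = 1*3*...*(2j-1), with (-1)!! = 1.\<close>
definition odd_dfact :: "nat \<Rightarrow> real" where
  "odd_dfact j = (\<Prod>i<j. real (2*i+1))"

definition stirling_base :: "real \<Rightarrow> real" where
  "stirling_base x = (if x = 0 then 1 else (1/2) * x^2 / (x - ln (1 + x)))"

definition stirling_gamma :: "nat \<Rightarrow> real" where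
  "stirling_gamma j = (-1)^j / (2^j * fact j) *
      (deriv ^^ (2*j)) (\<lambda>x. stirling_base x powr (real j + 1/2)) 0"

fun c_fun :: "nat \<Rightarrow> real \<Rightarrow> real" where
  "c_fun 0 = (\<lambda>e. 1 / (lam e - 1) - 1 / e)"
| "c_fun (Suc j) = (\<lambda>e. 1 / e * deriv (c_fun j) e + stirling_gamma (Suc j) / (lam e - 1))"

definition phi :: "nat \<Rightarrow> real \<Rightarrow> real" where
  "phi j l = (-1)^(j+1) * odd_dfact j / eta l ^ (2*j+1)"

definition phi_c :: "nat \<Rightarrow> complex \<Rightarrow> complex" where
  "phi_c j z = of_real ((-1)^(j+1) * odd_dfact j) / eta_c z ^ (2*j+1)"

definition singular_part :: "(complex \<Rightarrow> complex) \<Rightarrow> complex \<Rightarrow> complex \<Rightarrow> complex" where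
  "singular_part f z0 w =
     (let F = laurent_expansion f z0
      in \<Sum>k\<in>{fls_subdegree F..<0}. fls_nth F k * (w - z0) powi k)"

end

theory Submission
  imports Defs "HOL-Real_Asymp.Real_Asymp"
begin

lemma ln_strict: "x > 0 \<Longrightarrow> x \<noteq> 1 \<Longrightarrow> ln x < x - (1::real)"
proof -
  assume x: "x > 0" "x \<noteq> 1"
  have s: "sqrt x > 0" "sqrt x \<noteq> 1" "sqrt x ^ 2 = x" using x by auto
  have "ln x = 2 * ln (sqrt x)" using x by (simp add: ln_sqrt)
  also have "\<dots> \<le> 2 * (sqrt x - 1)" using ln_le_minus_one[OF s(1)] by simp
  also have "\<dots> < x - 1"
  proof -
    have "(sqrt x - 1)^2 > 0" using s by simp
    thus ?thesis using s(3) by (simp add: power2_eq_square algebra_simps)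
  qed
  finally show ?thesis .
qed

lemma xlnx_pos: "x > 0 \<Longrightarrow> x \<noteq> 1 \<Longrightarrow> x - 1 - ln x > (0::real)"
  using ln_strict by fastforce


lemma eta_sq: "x > 0 \<Longrightarrow> eta x ^ 2 = 2 * (x - 1 - ln x)"
proof (cases "x = 1")
  case False
  assume x: "x > 0"
  have "2 * (x - 1 - ln x) / (x - 1)^2 \<ge> 0" using xlnx_pos[OF x False] by simp
  then show ?thesis using False
    by (simp add: eta_def power_mult_distrib)
qed (simp add: eta_def)

lemma eta_pos: "x > 1 \<Longrightarrow> eta x > 0"
  using xlnx_pos[of x] by (simp add: eta_def)
lemma eta_neg: "x > 0 \<Longrightarrow> x < 1 \<Longrightarrow> eta x < 0"
  using xlnx_pos[of x] by (simp add: eta_def mult_neg_pos)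
lemma eta_1: "eta 1 = 0" by (simp add: eta_def)

lemma f_mono_up: "1 \<le> x \<Longrightarrow> x < y \<Longrightarrow> x - 1 - ln x < y - 1 - ln (y::real)"
proof -
  assume a: "1 \<le> x" "x < y"
  have "ln (y/x) < y/x - 1" using a by (intro ln_strict) auto
  also have "y/x - 1 = (y - x)/x" using a by (simp add: field_simps)
  also have "\<dots> \<le> y - x" using a by (simp add: divide_le_eq)
  finally show ?thesis using a by (simp add: ln_div)
qed

lemma f_mono_down: "0 < x \<Longrightarrow> x < y \<Longrightarrow> y \<le> 1 \<Longrightarrow> x - 1 - ln x > y - 1 - ln (y::real)"
proof -
  assume a: "0 < x" "x < y" "y \<le> 1"
  have "ln (x/y) < x/y - 1" using a by (intro ln_strict) auto
  also have "x/y - 1 = -((y - x)/y)" using a by (simp add: field_simps)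
  also have "\<dots> \<le> -(y - x)"
  proof -
    have "(y - x) * y \<le> (y - x) * 1" using a by (intro mult_left_mono) auto
    hence "y - x \<le> (y - x) / y" using a by (simp add: le_divide_eq)
    thus ?thesis by simp
  qed
  finally show ?thesis using a by (simp add: ln_div)
qed

lemma eta_mono: "0 < x \<Longrightarrow> x < y \<Longrightarrow> eta x < eta y"
proof -
  assume a: "0 < x" "x < y"
  consider "1 \<le> x" | "y \<le> 1" | "x < 1" "1 < y" by linarith
  then show ?thesis
  proof cases
    case 1
    have "eta x \<ge> 0" using eta_pos[of x] eta_1 1 by (cases "x = 1") auto
    moreover have "eta y > 0" using eta_pos 1 a by auto
    moreover have "eta x ^ 2 < eta y ^ 2" using eta_sq a f_mono_up[OF 1 a(2)] by simp
    ultimately show ?thesis using power_less_imp_less_base[of "eta x" 2 "eta y"] by auto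
  next
    case 2
    have "eta y \<le> 0" using eta_neg[of y] eta_1 2 a by (cases "y = 1") auto
    moreover have "eta x < 0" using eta_neg 2 a by auto
    moreover have "eta x ^ 2 > eta y ^ 2" using eta_sq a f_mono_down[OF a 2] by simp
    ultimately show ?thesis
      using power_less_imp_less_base[of "-eta y" 2 "-eta x"] by auto
  next
    case 3 then show ?thesis using eta_pos eta_neg a by fastforce
  qed
qed

lemma eta_inj: "inj_on eta {0<..}"
  by (metis eta_mono greaterThan_iff inj_onI linorder_neqE_linordered_idom order_less_irrefl)

lemma lam_eta: "x > 0 \<Longrightarrow> lam (eta x) = x"
  unfolding lam_def using eta_inj by (simp add: inv_into_f_f)

lemma eta_surj: "\<exists>x>0. eta x = e"
proof -
  define f where "f = (\<lambda>t::real. 2 * (t - 1 - ln t))"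
  have cont: "continuous_on {a..b} f" if "a > 0" for a b
    unfolding f_def using that by (intro continuous_intros) auto
  consider "e = 0" | "e > 0" | "e < 0" by linarith
  then show ?thesis
  proof cases
    case 1 then show ?thesis using eta_1 by (intro exI[of _ 1]) auto
  next
    case 2
    define X where "X = e^2 + 2"
    have X: "X > 1" unfolding X_def by (simp add: add_pos_nonneg)
    have "ln (X/2) \<le> X/2 - 1" using X by (intro ln_le_minus_one) auto
    hence "ln X \<le> X/2 - 1 + ln 2" using X by (simp add: ln_div)
    moreover have "ln 2 < (1::real)" using ln_less_self[of 2] ln_2_less_1 by simp
    moreover have "e^2 = X - 2" unfolding X_def by simp
    ultimately have "f X \<ge> e^2" unfolding f_def by (simp add: field_simps)
    moreover have "f 1 \<le> e^2" unfolding f_def by simp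
    ultimately obtain x where x: "1 \<le> x" "x \<le> X" "f x = e^2"
      using IVT'[of f 1 "e^2" X] cont[of 1 X] X by auto
    have "x \<noteq> 1" using x 2 unfolding f_def by auto
    hence "eta x > 0" using eta_pos x by auto
    moreover have "eta x ^ 2 = e ^ 2" using eta_sq[of x] x unfolding f_def by simp
    ultimately have "eta x = e" using 2
      using power2_eq_iff[of "eta x" e] by auto
    then show ?thesis using x by (intro exI[of _ x]) auto
  next
    case 3
    define X where "X = exp (-(e^2+1))"
    have "-1 < e^2" by (smt (verit) zero_le_power2)
    hence X: "X > 0" "X < 1" unfolding X_def by auto
    have "f X = 2 * X + 2 * e^2" unfolding f_def X_def by simp
    hence "f X \<ge> e^2" using X by simp
    moreover have "f 1 \<le> e^2" unfolding f_def by simp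
    ultimately obtain x where x: "X \<le> x" "x \<le> 1" "f x = e^2"
      using IVT2'[of f 1 "e^2" X] cont[of X 1] X by auto
    have "x \<noteq> 1" using x 3 unfolding f_def by auto
    hence "eta x < 0" using eta_neg x X by auto
    moreover have "eta x ^ 2 = e ^ 2" using eta_sq[of x] x X unfolding f_def by simp
    ultimately have "eta x = e" using 3
      using power2_eq_iff[of "eta x" e] by auto
    then show ?thesis using x X by (intro exI[of _ x]) auto
  qed
qed

lemma lam_pos: "lam e > 0" and eta_lam: "eta (lam e) = e"
proof -
  obtain x where x: "x > 0" "eta x = e" using eta_surj by blast
  then show "lam e > 0" "eta (lam e) = e" using lam_eta by auto
qed

lemma lam_1: "lam e = 1 \<longleftrightarrow> e = 0"
  using eta_lam eta_1 lam_eta by (metis zero_less_one)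


lemma eta_differentiable: "x > 0 \<Longrightarrow> x \<noteq> 1 \<Longrightarrow> \<exists>D. (eta has_real_derivative D) (at x)"
proof -
  assume x: "x > 0" "x \<noteq> 1"
  define Q where "Q = (\<lambda>t::real. 2 * (t - 1 - ln t) / (t - 1)^2)"
  have pos: "Q x > 0" using xlnx_pos[OF x] x by (simp add: Q_def)
  have "\<exists>Q'. (Q has_real_derivative Q') (at x)"
    unfolding Q_def using x by (intro exI) (rule derivative_intros | simp)+
  then obtain Q' where Q': "(Q has_real_derivative Q') (at x)" by blast
  have e: "eta = (\<lambda>t. (t - 1) * sqrt (Q t))" by (simp add: eta_def[abs_def] Q_def)
  show ?thesis unfolding e
    by (rule exI, rule DERIV_mult[OF DERIV_diff[OF DERIV_ident DERIV_const] DERIV_chain2[OF DERIV_real_sqrt[OF pos] Q']])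
qed

lemma eta_nz: "x > 0 \<Longrightarrow> x \<noteq> 1 \<Longrightarrow> eta x \<noteq> 0"
  using eta_pos[of x] eta_neg[of x] by (cases "x < 1") auto

lemma eta_deriv: "x > 0 \<Longrightarrow> x \<noteq> 1 \<Longrightarrow> (eta has_real_derivative (x - 1) / (x * eta x)) (at x)"
proof -
  assume x: "x > 0" "x \<noteq> 1"
  obtain D where D: "(eta has_real_derivative D) (at x)" using eta_differentiable[OF x] by blast
  have "((\<lambda>t. eta t ^ 2) has_real_derivative (2 * D * eta x)) (at x)"
    using DERIV_power[OF D, of 2] by (simp add: mult.assoc)
  moreover have "((\<lambda>t. eta t ^ 2) has_real_derivative 2 * (1 - 1/x)) (at x)"
  proof (rule has_field_derivative_transform_within_open[where S="{0<..}"])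
    show "((\<lambda>t. 2 * (t - 1 - ln t)) has_real_derivative 2 * (1 - 1/x)) (at x)"
      using x by (auto intro!: derivative_eq_intros)
  qed (use x eta_sq in auto)
  ultimately have "2 * eta x * D = 2 * (1 - 1/x)" using DERIV_unique by (metis mult.commute mult.left_commute)
  moreover have "eta x \<noteq> 0" using eta_nz x by blast
  ultimately have "D = (x - 1) / (x * eta x)" using x by (auto simp: field_simps)
  with D show ?thesis by simp
qed

lemma eta_isCont: "x > 0 \<Longrightarrow> x \<noteq> 1 \<Longrightarrow> isCont eta x"
  using eta_deriv DERIV_isCont by blast

lemma lam_deriv: "e \<noteq> 0 \<Longrightarrow> (lam has_real_derivative e * lam e / (lam e - 1)) (at e)"
proof -
  assume e: "e \<noteq> 0"
  define l where "l = lam e"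
  have l: "l > 0" "l \<noteq> 1" using lam_pos lam_1 e l_def by auto
  have el: "eta l = e" using eta_lam l_def by simp
  obtain a b where ab: "0 < a" "a < l" "l < b" "1 \<notin> {a..b}"
  proof (cases "l < 1")
    case True then show ?thesis using that[of "l/2" "(l+1)/2"] l by auto
  next
    case False then show ?thesis using that[of "(l+1)/2" "l+1"] l by auto
  qed
  have cont: "isCont lam e"
    using isCont_inverse_function2[of a l b lam eta] ab lam_eta eta_isCont el by force
  have "(lam has_real_derivative inverse ((l - 1) / (l * eta l))) (at e)"
    apply (rule DERIV_inverse_function[where a="e-1" and b="e+1"])
    using eta_deriv[OF l] el l_def eta_lam cont e l by auto
  then show ?thesis using el l e by (simp add: l_def field_simps)
qed


definition qr :: "complex \<Rightarrow> complex" where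
  "qr z = 2 * (z - 1 - Ln z) / (z - 1)^2"
definition qf :: "complex \<Rightarrow> complex" where
  "qf z = (if z = 1 then 1 else qr z)"
definition hf :: "complex \<Rightarrow> complex" where
  "hf z = csqrt (qf z)"

lemma eta_c_hf: "eta_c z = (z - 1) * hf z"
  by (cases "z = 1") (auto simp: eta_c_def hf_def qf_def qr_def)

lemma eta_c_sq: "eta_c z ^ 2 = 2 * (z - 1 - Ln z)"
  by (cases "z = 1") (auto simp: eta_c_def power_mult_distrib)

lemma eta_c_of_real: "x > 0 \<Longrightarrow> eta_c (of_real x) = of_real (eta x)"
proof -
  assume x: "x > 0"
  have eq: "2 * (of_real x - 1 - Ln (of_real x)) / (of_real x - 1)^2
        = (of_real (2 * (x - 1 - ln x) / (x - 1)^2) :: complex)"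
    using x by (simp add: Ln_of_real)
  have "2 * (x - 1 - ln x) / (x - 1)^2 \<ge> 0"
    using xlnx_pos[OF x] by (cases "x = 1") auto
  hence csq: "csqrt (of_real (2 * (x - 1 - ln x) / (x - 1)^2)) = of_real (sqrt (2 * (x - 1 - ln x) / (x - 1)^2))"
    by simp
  show ?thesis
    unfolding eta_c_def eta_def eq csq by simp
qed

lemma phi_c_of_real: "x > 0 \<Longrightarrow> phi_c j (of_real x) = of_real (phi j x)"
  by (simp add: phi_c_def phi_def eta_c_of_real)

lemma ball_Re: fixes z :: complex shows "z \<in> ball 1 r \<Longrightarrow> r \<le> 1 \<Longrightarrow> Re z > 0"
proof -
  assume "z \<in> ball 1 r" "r \<le> 1"
  hence "cmod (1 - z) < 1" by (simp add: dist_complex_def)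
  moreover have "Re (1 - z) \<le> cmod (1 - z)" by (rule complex_Re_le_cmod)
  ultimately show ?thesis by simp
qed

lemma ball_nonpos: fixes z :: complex shows "z \<in> ball 1 r \<Longrightarrow> r \<le> 1 \<Longrightarrow> z \<notin> \<real>\<^sub>\<le>\<^sub>0"
  using ball_Re[of z r] by (auto simp: complex_nonpos_Reals_iff)

lemma g_holo: "(\<lambda>z. z - 1 - Ln z) holomorphic_on ball 1 1"
proof -
  have "ball (1::complex) 1 \<inter> \<real>\<^sub>\<le>\<^sub>0 = {}" using ball_nonpos[of _ 1, OF _ order_refl] by blast
  then show ?thesis by (intro holomorphic_intros)
qed

lemma qf_holo: "qf holomorphic_on ball 1 1"
proof -
  define g where "g = (\<lambda>z::complex. z - 1 - Ln z)"
  have 1: "1 \<in> interior (ball (1::complex) 1)" by simp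
  define g1 where "g1 = (\<lambda>z. if z = 1 then deriv g 1 else (g z - g 1)/(z-1))"
  have g1h: "g1 holomorphic_on ball 1 1" using pole_lemma[OF g_holo[folded g_def] 1] unfolding g1_def .
  define g2 where "g2 = (\<lambda>z. if z = 1 then deriv g1 1 else (g1 z - g1 1)/(z-1))"
  have g2h: "g2 holomorphic_on ball 1 1" using pole_lemma[OF g1h 1] unfolding g2_def .
  have "(g has_field_derivative 1 - inverse 1) (at 1)"
    unfolding g_def by (auto intro!: derivative_eq_intros has_field_derivative_Ln)
  hence dg: "deriv g 1 = 0" by (simp add: DERIV_imp_deriv)
  have g1_1: "g1 1 = 0" by (simp add: g1_def dg)
  have g10: "g 1 = 0" by (simp add: g_def)
  have g2z: "g2 z = g z / (z - 1)^2" if "z \<noteq> 1" for z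
    using that by (simp add: g2_def g1_def g1_1 g10 dg power2_eq_square)
  have "isCont g2 1"
    using holomorphic_on_imp_continuous_on[OF g2h] continuous_on_eq_continuous_at[of "ball 1 1" g2] by simp
  hence "isCont (\<lambda>x::real. g2 (of_real x)) 1"
    by (intro isCont_o2[where g=g2 and f=of_real]) (auto intro: continuous_intros)
  hence lim1: "((\<lambda>x::real. g2 (of_real x)) \<longlongrightarrow> g2 1) (at 1)"
    by (simp add: isCont_def)
  have "((\<lambda>x::real. (x - 1 - ln x) / (x - 1)^2) \<longlongrightarrow> 1/2) (at 1)"
    by real_asymp
  hence lim2: "((\<lambda>x::real. of_real ((x - 1 - ln x) / (x - 1)^2) :: complex) \<longlongrightarrow> of_real (1/2)) (at 1)"
    by (rule tendsto_of_real)
  have ev: "eventually (\<lambda>x::real. of_real ((x - 1 - ln x) / (x - 1)^2) = g2 (of_real x)) (at 1)"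
  proof -
    have "eventually (\<lambda>x::real. x \<in> {0<..<2} - {1}) (at 1)"
      by (intro eventually_at_in_open) auto
    then show ?thesis
    proof eventually_elim
      case (elim x)
      then show ?case by (auto simp: g2z g_def Ln_of_real)
    qed
  qed
  have "g2 1 = of_real (1/2)"
    using tendsto_unique[OF _ lim1 tendsto_cong[OF ev, THEN iffD1, OF lim2]] by simp
  hence "2 * g2 1 = 1" by (simp add: mult.commute)
  hence "\<And>z. z \<in> ball 1 1 \<Longrightarrow> qf z = 2 * g2 z"
    by (auto simp: qf_def qr_def g2z g_def)
  moreover have "(\<lambda>z. 2 * g2 z) holomorphic_on ball 1 1" using g2h by (intro holomorphic_intros)
  ultimately show ?thesis using holomorphic_transform by metis
qed


lemma ex_rr: "\<exists>r>0. r \<le> 1 \<and> (\<forall>z\<in>ball 1 r. Re (qf z) > 1/2)"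
proof -
  have "isCont qf 1"
    using holomorphic_on_imp_continuous_on[OF qf_holo] continuous_on_eq_continuous_at[of "ball 1 1" qf] by simp
  then obtain d where d: "d > 0" "\<And>y. dist y 1 < d \<Longrightarrow> dist (qf y) (qf 1) < 1/2"
    unfolding continuous_at_eps_delta by (meson half_gt_zero_iff zero_less_one)
  have "Re (qf z) > 1/2" if "z \<in> ball 1 (min d 1)" for z
  proof -
    have q1: "qf 1 = 1" by (simp add: qf_def)
    have "dist (qf z) (qf 1) < 1/2" using d(2)[of z] that by (auto simp: dist_commute)
    hence "cmod (qf z - 1) < 1/2" by (simp only: q1 dist_norm)
    moreover have "Re (1 - qf z) \<le> cmod (qf z - 1)"
      by (metis complex_Re_le_cmod norm_minus_commute)
    ultimately show ?thesis by simp
  qed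
  then show ?thesis using d by (intro exI[of _ "min d 1"]) auto
qed

definition rr :: real where "rr = (SOME r. r > 0 \<and> r \<le> 1 \<and> (\<forall>z\<in>ball 1 r. Re (qf z) > 1/2))"

lemma rr: "rr > 0" "rr \<le> 1" "z \<in> ball 1 rr \<Longrightarrow> Re (qf z) > 1/2"
  using someI_ex[OF ex_rr] unfolding rr_def[symmetric] by auto

lemma qf_nonpos: "z \<in> ball 1 rr \<Longrightarrow> qf z \<notin> \<real>\<^sub>\<le>\<^sub>0"
  using rr(3)[of z] by (auto simp: complex_nonpos_Reals_iff)

lemma hf_holo: "hf holomorphic_on ball 1 rr"
proof -
  have "qf holomorphic_on ball 1 rr" by (rule holomorphic_on_subset[OF qf_holo]) (use rr(2) in auto)
  then show ?thesis unfolding hf_def[abs_def] using qf_nonpos by (intro holomorphic_intros) auto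
qed

lemma hf_nz: "z \<in> ball 1 rr \<Longrightarrow> hf z \<noteq> 0"
  using qf_nonpos[of z] by (auto simp: hf_def)

lemma hf_1: "hf 1 = 1" by (simp add: hf_def qf_def)

definition Cc :: "nat \<Rightarrow> complex" where "Cc j = of_real ((-1)^(j+1) * odd_dfact j)"
definition Hf :: "nat \<Rightarrow> complex \<Rightarrow> complex" where "Hf j z = inverse (hf z) ^ (2*j+1)"

lemma Hf_holo: "Hf j holomorphic_on ball 1 rr"
  unfolding Hf_def[abs_def] using hf_holo hf_nz by (intro holomorphic_intros) auto

lemma phi_c_ball: "z \<in> ball 1 rr \<Longrightarrow> z \<noteq> 1 \<Longrightarrow> phi_c j z = Cc j * Hf j z / (z - 1)^(2*j+1)"
  unfolding phi_c_def Cc_def Hf_def eta_c_hf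
  by (simp add: power_mult_distrib divide_simps hf_nz)

lemma powr_half_odd: "a > 0 \<Longrightarrow> a powr (real j + 1/2) = sqrt a ^ (2*j+1)"
proof -
  assume a: "a > 0"
  have "a powr (real j + 1/2) = a powr ((1/2) * real (2*j+1))" by (simp add: field_simps)
  also have "\<dots> = (a powr (1/2)) powr real (2*j+1)" by (simp add: powr_powr)
  also have "\<dots> = sqrt a powr real (2*j+1)" using a by (simp only: powr_half_sqrt[OF less_imp_le[OF a]])
  also have "\<dots> = sqrt a ^ (2*j+1)" by (rule powr_realpow) (simp add: a)
  finally show ?thesis .
qed

lemma Hf_real: "\<bar>x\<bar> < rr \<Longrightarrow> Hf j (1 + of_real x) = of_real (stirling_base x powr (real j + 1/2))"
proof (cases "x = 0")
  case True then show ?thesis by (simp add: Hf_def hf_1 stirling_base_def)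
next
  case False
  assume x: "\<bar>x\<bar> < rr"
  have x1: "1 + x > 0" using x rr(2) by linarith
  have "(1 + x) - 1 - ln (1 + x) > 0" using xlnx_pos[OF x1] False by simp
  hence pos: "x - ln (1 + x) > 0" by simp
  define Q where "Q = 2 * (x - ln (1 + x)) / x^2"
  have Q: "Q > 0" using pos False by (simp add: Q_def)
  have "qf (1 + of_real x) = of_real Q"
    using False x1 by (simp add: qf_def qr_def Q_def Ln_of_real[OF x1, symmetric])
  hence "hf (1 + of_real x) = of_real (sqrt Q)" using Q by (simp add: hf_def)
  hence "Hf j (1 + of_real x) = of_real (inverse (sqrt Q) ^ (2*j+1))" by (simp add: Hf_def)
  moreover have "stirling_base x = inverse Q"
    using False by (simp add: stirling_base_def Q_def field_simps)
  moreover have "inverse Q powr (real j + 1/2) = inverse (sqrt Q) ^ (2*j+1)"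
    using Q by (simp add: powr_half_odd real_sqrt_inverse)
  ultimately show ?thesis by simp
qed


lemma Cc_Suc: "Cc (Suc j) = - of_nat (2*j+1) * Cc j"
  by (simp add: Cc_def odd_dfact_def prod.lessThan_Suc algebra_simps)

lemma phi_deriv:
  assumes z: "z \<notin> \<real>\<^sub>\<le>\<^sub>0" "z \<noteq> 1" "qr z \<notin> \<real>\<^sub>\<le>\<^sub>0"
  shows "(phi_c j has_field_derivative (z - 1) / z * phi_c (Suc j) z) (at z)"
proof -
  define S where "S = - (\<real>\<^sub>\<le>\<^sub>0 \<union> {1::complex})"
  have S: "open S" "z \<in> S" using z by (auto simp: S_def)
  have qh: "qr holomorphic_on S"
    unfolding qr_def[abs_def] S_def by (intro holomorphic_intros) auto
  have dq: "(qr has_field_derivative deriv qr z) (at z)" by (rule holomorphic_derivI[OF qh S])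
  have ec: "eta_c = (\<lambda>w. (w - 1) * csqrt (qr w))" by (simp add: eta_c_def[abs_def] qr_def)
  obtain D where D: "(eta_c has_field_derivative D) (at z)"
    unfolding ec using DERIV_mult[OF DERIV_diff[OF DERIV_ident DERIV_const] has_field_derivative_csqrt'[OF dq z(3)]]
    by blast
  have z0: "z \<noteq> 0" using z(1) by auto
  have q0: "qr z \<noteq> 0" using z(3) by auto
  have "eta_c z = (z - 1) * csqrt (qr z)" by (simp add: ec)
  hence e0: "eta_c z \<noteq> 0" using z(2) q0 by simp
  have "((\<lambda>w. eta_c w ^ 2) has_field_derivative (2 * D * eta_c z)) (at z)"
    using DERIV_power[OF D, of 2] by (simp add: mult.assoc)
  moreover have "((\<lambda>w. eta_c w ^ 2) has_field_derivative 2 * (1 - inverse z)) (at z)"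
    unfolding eta_c_sq using z(1) by (auto intro!: derivative_eq_intros has_field_derivative_Ln)
  ultimately have "2 * D * eta_c z = 2 * (1 - inverse z)" by (rule DERIV_unique)
  hence "D * eta_c z = 1 - inverse z"
    by (metis mult.assoc mult_cancel_left zero_neq_numeral)
  hence "D = (1 - inverse z) / eta_c z" using e0 by (simp add: field_simps)
  hence Dv: "D = (z - 1) / (z * eta_c z)" using e0 z0 by (simp add: field_simps)
  have pc: "phi_c j = (\<lambda>w. Cc j / eta_c w ^ (2*j+1))" by (simp add: phi_c_def[abs_def] Cc_def)
  have n3: "2 * Suc j + 1 = 2*j+3" by simp
  have pc': "phi_c (Suc j) z = Cc (Suc j) / eta_c z ^ (2*j+3)" unfolding phi_c_def Cc_def n3 ..
  have "(phi_c j has_field_derivative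
      ((0 * eta_c z ^ (2*j+1) - Cc j * (of_nat (2*j+1) * (D * eta_c z ^ (2*j+1 - Suc 0)))) / (eta_c z ^ (2*j+1) * eta_c z ^ (2*j+1)))) (at z)"
    unfolding pc by (rule DERIV_divide[OF DERIV_const DERIV_power[OF D]]) (use e0 in simp)
  moreover have "((0 * eta_c z ^ (2*j+1) - Cc j * (of_nat (2*j+1) * (D * eta_c z ^ (2*j+1 - Suc 0)))) / (eta_c z ^ (2*j+1) * eta_c z ^ (2*j+1)))
     = (z - 1) / z * phi_c (Suc j) z"
  proof -
    define P where "P = eta_c z ^ (2*j)"
    have P0: "P \<noteq> 0" using e0 by (simp add: P_def)
    have p1: "eta_c z ^ (2*j+1) = eta_c z * P" by (simp add: P_def)
    have p2: "eta_c z ^ (2*j+1 - Suc 0) = P" by (simp add: P_def)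
    have p3: "eta_c z ^ (2*j+3) = eta_c z ^ 3 * P" by (simp add: P_def power_add)
    show ?thesis
      unfolding pc' Cc_Suc Dv p1 p2 p3 using e0 z0 P0 by (simp add: field_simps power3_eq_cube)
  qed
  ultimately show ?thesis by simp
qed

lemma fact_odd_dfact: "fact (2*n) = odd_dfact n * 2^n * (fact n :: real)"
proof (induction n)
  case 0 then show ?case by (simp add: odd_dfact_def)
next
  case (Suc n)
  have "fact (2 * Suc n) = (of_nat (2*n+2) * of_nat (2*n+1)) * (fact (2*n) :: real)"
    by (simp add: algebra_simps)
  also have "\<dots> = odd_dfact (Suc n) * 2^(Suc n) * fact (Suc n)"
    unfolding Suc by (simp add: odd_dfact_def prod.lessThan_Suc algebra_simps)
  finally show ?case .
qed

lemma RD1: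
  assumes G: "G holomorphic_on ball 1 rr" and Gr: "\<And>t. \<bar>t\<bar> < rr \<Longrightarrow> Im (G (1 + of_real t)) = 0"
    and x: "\<bar>x\<bar> < rr"
  shows "((\<lambda>t. Re (G (1 + of_real t))) has_real_derivative Re (deriv G (1 + of_real x))) (at x)"
    and "Im (deriv G (1 + of_real x)) = 0"
proof -
  have xb: "(1::complex) + of_real x \<in> ball 1 rr" using x by (simp add: dist_norm)
  have dG: "(G has_field_derivative deriv G (1 + of_real x)) (at (1 + of_real x))"
    by (rule holomorphic_derivI[OF G open_ball xb])
  have d1: "((\<lambda>w::complex. 1 + w) has_field_derivative 1) (at (of_real x))"
    by (auto intro!: derivative_eq_intros)
  have "((\<lambda>w. G (1 + w)) has_field_derivative deriv G (1 + of_real x)) (at (of_real x))"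
    using DERIV_chain2[where g="\<lambda>w. 1 + w" and f=G, OF dG d1] by simp
  hence v: "((\<lambda>t. G (1 + of_real t)) has_vector_derivative deriv G (1 + of_real x)) (at x)"
    by (rule has_vector_derivative_real_field)
  hence hd: "((\<lambda>t. G (1 + of_real t)) has_derivative (\<lambda>h. h *\<^sub>R deriv G (1 + of_real x))) (at x)"
    by (simp add: has_vector_derivative_def)
  have "((\<lambda>t. Re (G (1 + of_real t))) has_derivative (\<lambda>h. Re (h *\<^sub>R deriv G (1 + of_real x)))) (at x)"
    by (rule bounded_linear.has_derivative[OF bounded_linear_Re hd])
  moreover have "(\<lambda>h. Re (h *\<^sub>R deriv G (1 + of_real x))) = (*) (Re (deriv G (1 + of_real x)))"
    by (auto simp: fun_eq_iff)
  ultimately show "((\<lambda>t. Re (G (1 + of_real t))) has_real_derivative Re (deriv G (1 + of_real x))) (at x)"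
    by (simp add: has_field_derivative_def)
  have "((\<lambda>t. Im (G (1 + of_real t))) has_derivative (\<lambda>h. Im (h *\<^sub>R deriv G (1 + of_real x)))) (at x)"
    by (rule bounded_linear.has_derivative[OF bounded_linear_Im hd])
  moreover have "(\<lambda>h. Im (h *\<^sub>R deriv G (1 + of_real x))) = (*) (Im (deriv G (1 + of_real x)))"
    by (auto simp: fun_eq_iff)
  ultimately have d1: "((\<lambda>t. Im (G (1 + of_real t))) has_real_derivative Im (deriv G (1 + of_real x))) (at x)"
    by (simp add: has_field_derivative_def)
  have d2: "((\<lambda>t. Im (G (1 + of_real t))) has_real_derivative 0) (at x)"
    by (rule has_field_derivative_transform_within_open[OF DERIV_const, where S="{-rr<..<rr}"])
       (use x Gr in auto)
  show "Im (deriv G (1 + of_real x)) = 0" using DERIV_unique[OF d1 d2] .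
qed

lemma RDn:
  assumes G: "G holomorphic_on ball 1 rr" and Gr: "\<And>t. \<bar>t\<bar> < rr \<Longrightarrow> Im (G (1 + of_real t)) = 0"
  shows "\<bar>x\<bar> < rr \<Longrightarrow> (deriv ^^ n) (\<lambda>t. Re (G (1 + of_real t))) x = Re ((deriv ^^ n) G (1 + of_real x))
         \<and> Im ((deriv ^^ n) G (1 + of_real x)) = 0"
proof (induction n arbitrary: x)
  case 0 then show ?case using Gr by simp
next
  case (Suc n)
  define Gn where "Gn = (deriv ^^ n) G"
  have Gnh: "Gn holomorphic_on ball 1 rr" unfolding Gn_def by (rule holomorphic_higher_deriv[OF G open_ball])
  have Gnr: "\<And>t. \<bar>t\<bar> < rr \<Longrightarrow> Im (Gn (1 + of_real t)) = 0" using Suc.IH by (simp add: Gn_def)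
  have d: "((\<lambda>t. Re (Gn (1 + of_real t))) has_real_derivative Re (deriv Gn (1 + of_real x))) (at x)"
    by (rule RD1(1)[OF Gnh Gnr Suc.prems])
  have "((deriv ^^ n) (\<lambda>t. Re (G (1 + of_real t))) has_real_derivative Re (deriv Gn (1 + of_real x))) (at x)"
    by (rule has_field_derivative_transform_within_open[OF d, where S="{-rr<..<rr}"])
       (use Suc.prems Suc.IH in \<open>auto simp: Gn_def\<close>)
  hence "deriv ((deriv ^^ n) (\<lambda>t. Re (G (1 + of_real t)))) x = Re (deriv Gn (1 + of_real x))"
    by (rule DERIV_imp_deriv)
  moreover have "Im (deriv Gn (1 + of_real x)) = 0" by (rule RD1(2)[OF Gnh Gnr Suc.prems])
  ultimately show ?case by (simp add: Gn_def)
qed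

lemma gamma_Hf:
  shows "stirling_gamma n = (-1)^n / (2^n * fact n) * Re ((deriv ^^ (2*n)) (Hf n) 1)"
    and "Im ((deriv ^^ (2*n)) (Hf n) 1) = 0"
proof -
  have Hr: "\<And>t. \<bar>t\<bar> < rr \<Longrightarrow> Im (Hf n (1 + of_real t)) = 0" using Hf_real by simp
  have r0: "\<bar>0::real\<bar> < rr" using rr by simp
  have ev: "eventually (\<lambda>t. stirling_base t powr (real n + 1/2) = Re (Hf n (1 + of_real t))) (nhds 0)"
  proof -
    have "eventually (\<lambda>t::real. t \<in> ball 0 rr) (nhds 0)" using rr by (intro eventually_nhds_in_open) auto
    then show ?thesis by eventually_elim (simp add: Hf_real)
  qed
  have "(deriv ^^ (2*n)) (\<lambda>t. stirling_base t powr (real n + 1/2)) 0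
        = (deriv ^^ (2*n)) (\<lambda>t. Re (Hf n (1 + of_real t))) 0"
    by (rule higher_deriv_cong_ev[OF ev refl])
  also have "\<dots> = Re ((deriv ^^ (2*n)) (Hf n) 1)"
    using RDn[OF Hf_holo Hr r0, of "2*n"] by simp
  finally show "stirling_gamma n = (-1)^n / (2^n * fact n) * Re ((deriv ^^ (2*n)) (Hf n) 1)"
    by (simp add: stirling_gamma_def)
  show "Im ((deriv ^^ (2*n)) (Hf n) 1) = 0" using RDn[OF Hf_holo Hr r0, of "2*n"] by simp
qed


definition PP :: "int \<Rightarrow> (complex \<Rightarrow> complex) \<Rightarrow> bool" where
  "PP m T \<longleftrightarrow> (\<exists>K c. finite K \<and> K \<subseteq> {..m} \<and> (\<forall>z. z \<noteq> 1 \<longrightarrow> T z = (\<Sum>k\<in>K. c k * (z - 1) powi k)))"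

lemma PP_mono: "PP m T \<Longrightarrow> m \<le> m' \<Longrightarrow> PP m' T"
  unfolding PP_def by (meson atMost_subset_iff order_trans)

lemma PP_single: "k \<le> m \<Longrightarrow> PP m (\<lambda>z. a * (z - 1) powi k)"
  unfolding PP_def by (intro exI[of _ "{k}"] exI[of _ "\<lambda>_. a"]) auto

lemma PP_cmult: "PP m T \<Longrightarrow> PP m (\<lambda>z. a * T z)"
  unfolding PP_def
proof (elim exE conjE)
  fix K c assume *: "finite K" "K \<subseteq> {..m}" "\<forall>z. z \<noteq> 1 \<longrightarrow> T z = (\<Sum>k\<in>K. c k * (z - 1) powi k)"
  show "\<exists>K c. finite K \<and> K \<subseteq> {..m} \<and> (\<forall>z. z \<noteq> 1 \<longrightarrow> a * T z = (\<Sum>k\<in>K. c k * (z - 1) powi k))"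
    using * by (intro exI[of _ K] exI[of _ "\<lambda>k. a * c k"]) (auto simp: sum_distrib_left mult.assoc)
qed

lemma PP_add: "PP m T1 \<Longrightarrow> PP m T2 \<Longrightarrow> PP m (\<lambda>z. T1 z + T2 z)"
  unfolding PP_def
proof (elim exE conjE)
  fix K1 c1 K2 c2
  assume 1: "finite K1" "K1 \<subseteq> {..m}" "\<forall>z. z \<noteq> 1 \<longrightarrow> T1 z = (\<Sum>k\<in>K1. c1 k * (z - 1) powi k)"
     and 2: "finite K2" "K2 \<subseteq> {..m}" "\<forall>z. z \<noteq> 1 \<longrightarrow> T2 z = (\<Sum>k\<in>K2. c2 k * (z - 1) powi k)"
  define c where "c = (\<lambda>k. (if k \<in> K1 then c1 k else 0) + (if k \<in> K2 then c2 k else 0))"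
  have "T1 z + T2 z = (\<Sum>k\<in>K1 \<union> K2. c k * (z - 1) powi k)" if z: "z \<noteq> 1" for z
  proof -
    have "(\<Sum>k\<in>K1 \<union> K2. c k * (z - 1) powi k)
        = (\<Sum>k\<in>K1 \<union> K2. (if k \<in> K1 then c1 k * (z - 1) powi k else 0))
        + (\<Sum>k\<in>K1 \<union> K2. (if k \<in> K2 then c2 k * (z - 1) powi k else 0))"
      unfolding c_def sum.distrib[symmetric] by (intro sum.cong) (auto simp: distrib_right)
    also have "(\<Sum>k\<in>K1 \<union> K2. (if k \<in> K1 then c1 k * (z - 1) powi k else 0)) = (\<Sum>k\<in>K1. c1 k * (z - 1) powi k)"
      using 1 2 by (simp add: sum.If_cases Int_absorb1)
    also have "(\<Sum>k\<in>K1 \<union> K2. (if k \<in> K2 then c2 k * (z - 1) powi k else 0)) = (\<Sum>k\<in>K2. c2 k * (z - 1) powi k)"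
      using 1 2 by (simp add: sum.If_cases Int_absorb1)
    finally show ?thesis using 1 2 z by simp
  qed
  then show "\<exists>K c. finite K \<and> K \<subseteq> {..m} \<and> (\<forall>z. z \<noteq> 1 \<longrightarrow> T1 z + T2 z = (\<Sum>k\<in>K. c k * (z - 1) powi k))"
    using 1 2 by (intro exI[of _ "K1 \<union> K2"] exI[of _ c]) auto
qed

lemma PP_div: "PP m T \<Longrightarrow> PP (m - 1) (\<lambda>z. T z / (z - 1))"
  unfolding PP_def
proof (elim exE conjE)
  fix K c assume *: "finite K" "K \<subseteq> {..m}" "\<forall>z. z \<noteq> 1 \<longrightarrow> T z = (\<Sum>k\<in>K. c k * (z - 1) powi k)"
  have inj: "inj_on (\<lambda>k::int. k - 1) K" by (auto simp: inj_on_def)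
  have "T z / (z - 1) = (\<Sum>k\<in>(\<lambda>k. k - 1) ` K. c (k + 1) * (z - 1) powi k)" if z: "z \<noteq> 1" for z
  proof -
    have "(\<Sum>k\<in>(\<lambda>k. k - 1) ` K. c (k + 1) * (z - 1) powi k) = (\<Sum>k\<in>K. c k * (z - 1) powi (k - 1))"
      by (simp add: sum.reindex[OF inj] o_def)
    also have "\<dots> = (\<Sum>k\<in>K. c k * (z - 1) powi k) / (z - 1)"
      using z by (simp add: sum_divide_distrib power_int_diff)
    finally show ?thesis using * z by simp
  qed
  then show "\<exists>K c. finite K \<and> K \<subseteq> {..m-1} \<and> (\<forall>z. z \<noteq> 1 \<longrightarrow> T z / (z - 1) = (\<Sum>k\<in>K. c k * (z - 1) powi k))"
    using * by (intro exI[of _ "(\<lambda>k. k - 1) ` K"] exI[of _ "\<lambda>k. c (k + 1)"]) auto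
qed

lemma PP_deriv: "PP m T \<Longrightarrow> \<exists>T'. PP (m - 1) T' \<and> (\<forall>z. z \<noteq> 1 \<longrightarrow> (T has_field_derivative T' z) (at z))"
proof -
  assume "PP m T"
  then obtain K c where *: "finite K" "K \<subseteq> {..m}" "\<forall>z. z \<noteq> 1 \<longrightarrow> T z = (\<Sum>k\<in>K. c k * (z - 1) powi k)"
    unfolding PP_def by blast
  define T' where "T' = (\<lambda>z. (\<Sum>k\<in>K. (c k * of_int k) * (z - 1) powi k) / (z - 1))"
  have "PP m (\<lambda>z. (\<Sum>k\<in>K. (c k * of_int k) * (z - 1) powi k))"
    unfolding PP_def using * by (intro exI[of _ K] exI[of _ "\<lambda>k. c k * of_int k"]) auto
  hence "PP (m - 1) T'" unfolding T'_def by (rule PP_div)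
  moreover have "(T has_field_derivative T' z) (at z)" if z: "z \<noteq> 1" for z
  proof -
    have "((\<lambda>z. \<Sum>k\<in>K. c k * (z - 1) powi k) has_field_derivative
           (\<Sum>k\<in>K. c k * (of_int k * (z - 1) powi (k - 1) * 1))) (at z)"
      using z by (intro DERIV_sum DERIV_cmult DERIV_power_int) (auto intro!: derivative_eq_intros)
    moreover have "(\<Sum>k\<in>K. c k * (of_int k * (z - 1) powi (k - 1) * 1)) = T' z"
      unfolding T'_def using z by (simp add: sum_divide_distrib power_int_diff mult.assoc)
    ultimately have "((\<lambda>z. \<Sum>k\<in>K. c k * (z - 1) powi k) has_field_derivative T' z) (at z)" by simp
    then show ?thesis
      by (rule has_field_derivative_transform_within_open[where S="-{1}"]) (use z * in auto)
  qed
  ultimately show ?thesis by blast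
qed

lemma PP_integral:
  assumes "PP (-2) T" "\<rho> > 0"
  shows "(T has_contour_integral 0) (circlepath 1 \<rho>)"
proof -
  obtain K c where *: "finite K" "K \<subseteq> {..-2}" "\<forall>z. z \<noteq> 1 \<longrightarrow> T z = (\<Sum>k\<in>K. c k * (z - 1) powi k)"
    using assms(1) unfolding PP_def by blast
  have one: "((\<lambda>u. c k * (u - 1) powi k) has_contour_integral 0) (circlepath 1 \<rho>)" if k: "k \<in> K" for k
  proof -
    define n where "n = nat (-k) - 1"
    have n: "n \<ge> 1" "k = - int (Suc n)" using * k by (auto simp: n_def)
    have "((\<lambda>u. c k / (u - 1) ^ Suc n) has_contour_integral
           ((2 * pi * \<i>) / fact n * (deriv ^^ n) (\<lambda>_. c k) 1)) (circlepath 1 \<rho>)"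
      by (rule Cauchy_has_contour_integral_higher_derivative_circlepath) (use assms(2) in auto)
    hence "((\<lambda>u. c k / (u - 1) ^ Suc n) has_contour_integral 0) (circlepath 1 \<rho>)"
      using n by simp
    have pk: "\<And>u::complex. (u - 1) powi k = inverse ((u - 1) ^ Suc n)"
      by (simp only: n(2) power_int_minus power_int_of_nat)
    show ?thesis
      by (rule has_contour_integral_eq[OF \<open>((\<lambda>u. c k / (u - 1) ^ Suc n) has_contour_integral 0) (circlepath 1 \<rho>)\<close>]) (simp add: pk divide_inverse)
  qed
  have "((\<lambda>u. \<Sum>k\<in>K. c k * (u - 1) powi k) has_contour_integral (\<Sum>k\<in>K. 0)) (circlepath 1 \<rho>)"
    by (rule has_contour_integral_sum) (use * one in auto)
  hence "((\<lambda>u. \<Sum>k\<in>K. c k * (u - 1) powi k) has_contour_integral 0) (circlepath 1 \<rho>)" by simp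
  then show ?thesis
  proof (rule has_contour_integral_eq)
    fix u assume "u \<in> path_image (circlepath 1 \<rho>)"
    hence "u \<noteq> 1" using notin_path_image_circlepath[of 1 1 \<rho>] assms(2) by auto
    then show "(\<Sum>k\<in>K. c k * (u - 1) powi k) = T u" using * by simp
  qed
qed

lemma PP_sing: "PP (-1) (singular_part f 1)"
  unfolding PP_def singular_part_def Let_def
  by (intro exI[of _ "{fls_subdegree (laurent_expansion f 1)..<0}"] exI) auto


lemma PP_unique:
  assumes T: "PP (-1) T" and R: "R holomorphic_on ball 1 r" and r: "r > 0"
    and f: "\<And>z. z \<in> ball 1 r \<Longrightarrow> z \<noteq> 1 \<Longrightarrow> f z = T z + R z" and w: "w \<noteq> 1"
  shows "singular_part f 1 w = T w"
proof -
  obtain K c where *: "finite K" "K \<subseteq> {..-1}" "\<forall>z. z \<noteq> 1 \<longrightarrow> T z = (\<Sum>k\<in>K. c k * (z - 1) powi k)"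
    using T unfolding PP_def by blast
  define F where "F = (\<Sum>k\<in>K. fls_const (c k) * fls_X_intpow k) + fps_to_fls (fps_expansion R 1)"
  have an: "R analytic_on {1}" using R r unfolding analytic_at by (intro exI[of _ "ball 1 r"]) auto
  have e1: "(\<lambda>x. \<Sum>k\<in>K. c k * x powi k) has_laurent_expansion (\<Sum>k\<in>K. fls_const (c k) * fls_X_intpow k)"
    by (intro has_laurent_expansion_sum has_laurent_expansion_cmult_left has_laurent_expansion_fps_X_power_int)
  have e2: "(\<lambda>x. R (1 + x)) has_laurent_expansion fps_to_fls (fps_expansion R 1)"
    by (rule has_laurent_expansion_fps[OF analytic_at_imp_has_fps_expansion[OF an]])
  have e3: "(\<lambda>x. (\<Sum>k\<in>K. c k * x powi k) + R (1 + x)) has_laurent_expansion F"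
    using has_laurent_expansion_add[OF e1 e2] unfolding F_def .
  have ev: "eventually (\<lambda>x. (\<Sum>k\<in>K. c k * x powi k) + R (1 + x) = f (1 + x)) (at 0)"
  proof -
    have "eventually (\<lambda>x. x \<in> ball 0 r - {0}) (at (0::complex))"
      using r by (intro eventually_at_in_open) auto
    then show ?thesis
    proof eventually_elim
      case (elim x)
      hence "1 + x \<in> ball 1 r" "1 + x \<noteq> 1" by (auto simp: dist_norm)
      then show ?case using f[of "1 + x"] * by simp
    qed
  qed
  have "(\<lambda>x. f (1 + x)) has_laurent_expansion F"
    using has_laurent_expansion_cong[OF ev refl] e3 by simp
  hence LE: "laurent_expansion f 1 = F" by (rule laurent_expansion_eqI)
  have nth: "fls_nth F k = (if k \<in> K then c k else 0)" if "k < 0" for k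
  proof -
    have "fls_nth F k = (\<Sum>i\<in>K. (if k = i then c i else 0))"
      using that by (simp add: F_def fls_nth_sum fls_X_intpow_times_conv_shift)
    also have "\<dots> = (if k \<in> K then c k else 0)" using *(1) by (simp add: sum.delta)
    finally show ?thesis .
  qed
  define A where "A = {fls_subdegree F..<0}"
  have "singular_part f 1 w = (\<Sum>k\<in>A. fls_nth F k * (w - 1) powi k)"
    by (simp add: singular_part_def LE A_def)
  also have "\<dots> = (\<Sum>k\<in>A. (if k \<in> K then c k * (w - 1) powi k else 0))"
    by (intro sum.cong) (auto simp: A_def nth)
  also have "\<dots> = (\<Sum>k\<in>A \<inter> K. c k * (w - 1) powi k)"
    by (simp add: sum.inter_restrict A_def)
  also have "\<dots> = (\<Sum>k\<in>K. c k * (w - 1) powi k)"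
  proof (rule sum.mono_neutral_left)
    show "\<forall>i\<in>K - A \<inter> K. c i * (w - 1) powi i = 0"
    proof
      fix i assume i: "i \<in> K - A \<inter> K"
      hence i0: "i < 0" using *(2) by auto
      hence "i < fls_subdegree F" using i by (auto simp: A_def)
      hence "fls_nth F i = 0" by simp
      then show "c i * (w - 1) powi i = 0" using nth[OF i0] i by auto
    qed
  qed (use * in auto)
  also have "\<dots> = T w" using * w by simp
  finally show ?thesis .
qed


abbreviation Sg :: "nat \<Rightarrow> complex \<Rightarrow> complex" where "Sg j \<equiv> singular_part (phi_c j) 1"

lemma odd_dfact_pos: "odd_dfact n > 0"
  unfolding odd_dfact_def by (intro prod_pos) auto

lemma base_case:
  shows "\<exists>R. R holomorphic_on ball 1 rr \<and> (\<forall>z\<in>ball 1 rr. z \<noteq> 1 \<longrightarrow> phi_c 0 z = Sg 0 z + R z)"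
    and "\<And>w. w \<noteq> 1 \<Longrightarrow> Sg 0 w = - inverse (w - 1)"
proof -
  define f0 where "f0 = (\<lambda>z. - inverse (hf z))"
  have f0h: "f0 holomorphic_on ball 1 rr" unfolding f0_def using hf_holo hf_nz by (intro holomorphic_intros) auto
  have 1: "1 \<in> interior (ball (1::complex) rr)" using rr by simp
  define R0 where "R0 = (\<lambda>z. if z = 1 then deriv f0 1 else (f0 z - f0 1) / (z - 1))"
  have R0h: "R0 holomorphic_on ball 1 rr" using pole_lemma[OF f0h 1] unfolding R0_def .
  define T0 where "T0 = (\<lambda>z::complex. (-1) * (z - 1) powi (-1))"
  have T0: "PP (-1) T0" unfolding T0_def by (rule PP_single) simp
  have dec: "phi_c 0 z = T0 z + R0 z" if "z \<in> ball 1 rr" "z \<noteq> 1" for z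
  proof -
    have "phi_c 0 z = Cc 0 * Hf 0 z / (z - 1) ^ (2*0+1)" by (rule phi_c_ball[OF that])
    also have "\<dots> = - inverse (hf z) / (z - 1)" by (simp add: Cc_def Hf_def odd_dfact_def)
    also have "\<dots> = T0 z + R0 z"
    proof -
      have r: "R0 z = (- inverse (hf z) + 1) / (z - 1)" using that by (simp add: R0_def f0_def hf_1)
      have t: "T0 z = - 1 / (z - 1)" by (simp add: T0_def power_int_minus divide_inverse)
      have "z - 1 \<noteq> 0" using that by simp
      then show ?thesis unfolding r t by (simp add: divide_inverse algebra_simps)
    qed
    finally show ?thesis .
  qed
  have S0: "Sg 0 w = T0 w" if "w \<noteq> 1" for w
    by (rule PP_unique[OF T0 R0h rr(1) dec that])
  show "\<And>w. w \<noteq> 1 \<Longrightarrow> Sg 0 w = - inverse (w - 1)" using S0 by (simp add: T0_def power_int_minus)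
  show "\<exists>R. R holomorphic_on ball 1 rr \<and> (\<forall>z\<in>ball 1 rr. z \<noteq> 1 \<longrightarrow> phi_c 0 z = Sg 0 z + R z)"
    using R0h dec S0 by (intro exI[of _ R0]) auto
qed

lemma step_case:
  assumes Rh: "R holomorphic_on ball 1 rr"
    and dec: "\<And>z. z \<in> ball 1 rr \<Longrightarrow> z \<noteq> 1 \<Longrightarrow> phi_c j z = Sg j z + R z"
  shows "\<exists>R'. R' holomorphic_on ball 1 rr \<and> (\<forall>z\<in>ball 1 rr. z \<noteq> 1 \<longrightarrow> phi_c (Suc j) z = Sg (Suc j) z + R' z)"
    and "\<And>w D. w \<noteq> 1 \<Longrightarrow> (Sg j has_field_derivative D) (at w) \<Longrightarrow>
            Sg (Suc j) w = w / (w - 1) * D - of_real (stirling_gamma (Suc j)) / (w - 1)"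
proof -
  obtain S' where S'pp: "PP (-2) S'" and S'd: "\<And>z. z \<noteq> 1 \<Longrightarrow> (Sg j has_field_derivative S' z) (at z)"
    using PP_deriv[OF PP_sing[of "phi_c j"]] by auto
  define g where "g = (of_real (stirling_gamma (Suc j)) :: complex)"
  define T where "T = (\<lambda>z. (S' z + S' z / (z - 1)) + (-g) * (z - 1) powi (-1))"
  have PS: "PP (-2) (\<lambda>z. S' z + S' z / (z - 1))"
    by (intro PP_add S'pp PP_mono[OF PP_div[OF S'pp]]) simp
  have Tpp: "PP (-1) T" unfolding T_def
    by (intro PP_add PP_mono[OF PS] PP_single) simp_all
  have Tv: "T z = z / (z - 1) * S' z - g / (z - 1)" if "z \<noteq> 1" for z
  proof -
    have "z - 1 \<noteq> 0" using that by simp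
    then show ?thesis unfolding T_def by (simp add: power_int_minus field_simps)
  qed
  have dR: "(R has_field_derivative deriv R z) (at z)" if "z \<in> ball 1 rr" for z
    by (rule holomorphic_derivI[OF Rh open_ball that])
  have phiS: "phi_c (Suc j) z = z / (z - 1) * (S' z + deriv R z)" if z: "z \<in> ball 1 rr" "z \<noteq> 1" for z
  proof -
    have z0: "z \<noteq> 0" using ball_Re[OF z(1) rr(2)] by auto
    have "qr z \<notin> \<real>\<^sub>\<le>\<^sub>0" using qf_nonpos[OF z(1)] z(2) by (simp add: qf_def)
    hence d1: "(phi_c j has_field_derivative (z - 1) / z * phi_c (Suc j) z) (at z)"
      using phi_deriv ball_nonpos[OF z(1) rr(2)] z(2) by blast
    have "((\<lambda>w. Sg j w + R w) has_field_derivative S' z + deriv R z) (at z)"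
      by (intro DERIV_add S'd dR z)
    hence d2: "(phi_c j has_field_derivative S' z + deriv R z) (at z)"
      by (rule has_field_derivative_transform_within_open[where S="ball 1 rr - {1}"]) (use z dec in auto)
    have "(z - 1) / z * phi_c (Suc j) z = S' z + deriv R z" by (rule DERIV_unique[OF d1 d2])
    then show ?thesis using z0 z(2) by (auto simp: field_simps)
  qed
  define \<rho> where "\<rho> = rr / 2"
  have \<rho>: "\<rho> > 0" "cball 1 \<rho> \<subseteq> ball 1 rr" using rr by (auto simp: \<rho>_def)
  have \<rho>3: "ball 1 \<rho> \<subseteq> ball 1 rr" using \<rho>(2) ball_subset_cball by blast
  have pim: "u \<in> ball 1 rr" "u \<noteq> 1" if "u \<in> path_image (circlepath 1 \<rho>)" for u
  proof -
    have "u \<in> sphere 1 \<rho>" using that \<rho> by (simp add: path_image_circlepath)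
    then show "u \<in> ball 1 rr" "u \<noteq> 1" using \<rho> by auto
  qed
  define Dh where "Dh = (deriv ^^ (2*j+2)) (Hf (Suc j)) 1"
  have I1: "(phi_c (Suc j) has_contour_integral (Cc (Suc j) * ((2 * pi * \<i>) / fact (2*j+2) * Dh))) (circlepath 1 \<rho>)"
  proof -
    have "((\<lambda>u. Hf (Suc j) u / (u - 1) ^ Suc (2*j+2)) has_contour_integral ((2 * pi * \<i>) / fact (2*j+2) * Dh)) (circlepath 1 \<rho>)"
      unfolding Dh_def
      by (rule Cauchy_has_contour_integral_higher_derivative_circlepath)
         (use \<rho> \<rho>3 in \<open>auto intro: holomorphic_on_imp_continuous_on holomorphic_on_subset[OF Hf_holo]\<close>)
    hence "((\<lambda>u. Cc (Suc j) * (Hf (Suc j) u / (u - 1) ^ Suc (2*j+2))) has_contour_integral (Cc (Suc j) * ((2 * pi * \<i>) / fact (2*j+2) * Dh))) (circlepath 1 \<rho>)"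
      by (rule has_contour_integral_lmul)
    then show ?thesis
    proof (rule has_contour_integral_eq)
      fix u assume "u \<in> path_image (circlepath 1 \<rho>)"
      then show "Cc (Suc j) * (Hf (Suc j) u / (u - 1) ^ Suc (2*j+2)) = phi_c (Suc j) u"
        using phi_c_ball[OF pim] by simp
    qed
  qed
  have I2: "(phi_c (Suc j) has_contour_integral (2 * pi * \<i> * deriv R 1)) (circlepath 1 \<rho>)"
  proof -
    have a: "((\<lambda>u. S' u + S' u / (u - 1)) has_contour_integral 0) (circlepath 1 \<rho>)"
      by (rule PP_integral[OF PS \<rho>(1)])
    have hR: "(\<lambda>u. u * deriv R u) holomorphic_on ball 1 rr"
      using Rh by (intro holomorphic_intros holomorphic_deriv) auto
    have "((\<lambda>u. u * deriv R u / (u - 1) ^ Suc 0) has_contour_integral ((2 * pi * \<i>) / fact 0 * (deriv ^^ 0) (\<lambda>u. u * deriv R u) 1)) (circlepath 1 \<rho>)"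
      by (rule Cauchy_has_contour_integral_higher_derivative_circlepath)
         (use \<rho> \<rho>3 in \<open>auto intro: holomorphic_on_imp_continuous_on holomorphic_on_subset[OF hR]\<close>)
    hence b: "((\<lambda>u. u * deriv R u / (u - 1)) has_contour_integral (2 * pi * \<i> * deriv R 1)) (circlepath 1 \<rho>)"
      by simp
    have "((\<lambda>u. (S' u + S' u / (u - 1)) + u * deriv R u / (u - 1)) has_contour_integral (0 + 2 * pi * \<i> * deriv R 1)) (circlepath 1 \<rho>)"
      by (rule has_contour_integral_add[OF a b])
    hence "((\<lambda>u. (S' u + S' u / (u - 1)) + u * deriv R u / (u - 1)) has_contour_integral (2 * pi * \<i> * deriv R 1)) (circlepath 1 \<rho>)"
      by simp
    then show ?thesis
    proof (rule has_contour_integral_eq)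
      fix u assume u: "u \<in> path_image (circlepath 1 \<rho>)"
      have ne: "u - 1 \<noteq> 0" using pim[OF u] by simp
      have "S' u + S' u / (u - 1) = u / (u - 1) * S' u" using ne by (simp add: field_simps)
      then show "(S' u + S' u / (u - 1)) + u * deriv R u / (u - 1) = phi_c (Suc j) u"
        using phiS[OF pim[OF u]] by (simp add: divide_inverse algebra_simps)
    qed
  qed
  have "2 * pi * \<i> * deriv R 1 = Cc (Suc j) * ((2 * pi * \<i>) / fact (2*j+2) * Dh)"
    using has_contour_integral_unique[OF I2 I1] .
  moreover have aux: "\<And>F c x C D. F \<noteq> 0 \<Longrightarrow> c \<noteq> 0 \<Longrightarrow> c * x = C * (c / F * D) \<Longrightarrow> x = C * D / (F::complex)"
    by (simp add: field_simps)
  moreover have "(fact (2*j+2) :: complex) \<noteq> 0" by (rule fact_nonzero)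
  moreover have "2 * pi * \<i> \<noteq> 0" by simp
  ultimately have dR1: "deriv R 1 = Cc (Suc j) * Dh / fact (2*j+2)" by blast
  have ImD: "Im Dh = 0" using gamma_Hf(2)[of "Suc j"] by (simp add: Dh_def)
  have gD: "stirling_gamma (Suc j) = (-1)^(Suc j) / (2^(Suc j) * fact (Suc j)) * Re Dh"
    using gamma_Hf(1)[of "Suc j"] by (simp add: Dh_def)
  have fo: "(fact (2*j+2) :: real) = odd_dfact (Suc j) * 2^(Suc j) * fact (Suc j)"
    using fact_odd_dfact[of "Suc j"] by simp
  define d where "d = Re Dh"
  have DhR: "Dh = of_real d" using ImD by (simp add: complex_eq_iff d_def)
  have "deriv R 1 = of_real ((-1)^(Suc j + 1) * odd_dfact (Suc j)) * of_real d / of_real (fact (2*j+2))"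
    unfolding dR1 Cc_def DhR of_real_fact ..
  also have "\<dots> = of_real ((-1)^(Suc j + 1) * odd_dfact (Suc j) * d / fact (2*j+2))"
    by simp
  also have "(-1)^(Suc j + 1) * odd_dfact (Suc j) * d / fact (2*j+2) = - stirling_gamma (Suc j)"
  proof -
    have aux: "\<And>(q::real) X s. q > 0 \<Longrightarrow> X \<noteq> 0 \<Longrightarrow> (- s) * q * d / (q * X) = - (s / X * d)"
      by (simp add: field_simps)
    have "(2::real)^(Suc j) * fact (Suc j) \<noteq> 0" by simp
    from aux[OF odd_dfact_pos this, of "(-1)^(Suc j)"]
    show ?thesis unfolding gD fo d_def[symmetric] by (simp add: mult.assoc)
  qed
  also have "of_real (- stirling_gamma (Suc j)) = - g" by (simp add: g_def)
  finally have dR1': "deriv R 1 + g = 0" by simp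
  define fR where "fR = (\<lambda>z. z * deriv R z + g)"
  have fRh: "fR holomorphic_on ball 1 rr"
    unfolding fR_def using Rh by (intro holomorphic_intros holomorphic_deriv) auto
  have fR1: "fR 1 = 0" using dR1' by (simp add: fR_def)
  define R' where "R' = (\<lambda>z. if z = 1 then deriv fR 1 else (fR z - fR 1) / (z - 1))"
  have R'h: "R' holomorphic_on ball 1 rr" using pole_lemma[OF fRh] rr unfolding R'_def by simp
  have dec': "phi_c (Suc j) z = T z + R' z" if z: "z \<in> ball 1 rr" "z \<noteq> 1" for z
  proof -
    have "R' z = (fR z - fR 1) / (z - 1)" using z by (simp add: R'_def)
    also have "\<dots> = (z * deriv R z + g) / (z - 1)" unfolding fR1 by (simp add: fR_def)
    finally have r: "R' z = (z * deriv R z + g) / (z - 1)" .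
    show ?thesis unfolding phiS[OF z] Tv[OF z(2)] r by (simp add: divide_inverse algebra_simps)
  qed
  have ST: "Sg (Suc j) w = T w" if "w \<noteq> 1" for w
    by (rule PP_unique[OF Tpp R'h rr(1) dec' that])
  show "\<exists>R'. R' holomorphic_on ball 1 rr \<and> (\<forall>z\<in>ball 1 rr. z \<noteq> 1 \<longrightarrow> phi_c (Suc j) z = Sg (Suc j) z + R' z)"
    using R'h dec' ST by (intro exI[of _ R']) auto
  fix w D assume w: "w \<noteq> 1" and D: "(Sg j has_field_derivative D) (at w)"
  have "D = S' w" using DERIV_unique[OF D S'd[OF w]] .
  then show "Sg (Suc j) w = w / (w - 1) * D - of_real (stirling_gamma (Suc j)) / (w - 1)"
    using ST[OF w] Tv[OF w] by (simp add: g_def)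
qed


lemma decomp: "\<exists>R. R holomorphic_on ball 1 rr \<and> (\<forall>z\<in>ball 1 rr. z \<noteq> 1 \<longrightarrow> phi_c j z = Sg j z + R z)"
proof (induction j)
  case 0 then show ?case by (rule base_case(1))
next
  case (Suc j)
  then obtain R where "R holomorphic_on ball 1 rr" "\<forall>z\<in>ball 1 rr. z \<noteq> 1 \<longrightarrow> phi_c j z = Sg j z + R z" by blast
  then show ?case using step_case(1)[of R j] by blast
qed

lemma Srec: "w \<noteq> 1 \<Longrightarrow> (Sg j has_field_derivative D) (at w) \<Longrightarrow>
   Sg (Suc j) w = w / (w - 1) * D - of_real (stirling_gamma (Suc j)) / (w - 1)"
  using decomp[of j] step_case(2) by blast

lemma Sg_deriv: "w \<noteq> 1 \<Longrightarrow> \<exists>D. (Sg j has_field_derivative D) (at w)"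
  using PP_deriv[OF PP_sing[of "phi_c j"]] by blast

lemma RE_deriv:
  assumes "(G has_field_derivative G') (at (of_real x))"
  shows "((\<lambda>t. Re (G (of_real t))) has_real_derivative Re G') (at x)"
    and "((\<lambda>t. Im (G (of_real t))) has_real_derivative Im G') (at x)"
proof -
  have "((\<lambda>t. G (of_real t)) has_vector_derivative G') (at x)"
    by (rule has_vector_derivative_real_field[OF assms])
  hence hd: "((\<lambda>t. G (of_real t)) has_derivative (\<lambda>h. h *\<^sub>R G')) (at x)"
    by (simp add: has_vector_derivative_def)
  have "((\<lambda>t. Re (G (of_real t))) has_derivative (\<lambda>h. Re (h *\<^sub>R G'))) (at x)"
    by (rule bounded_linear.has_derivative[OF bounded_linear_Re hd])
  moreover have "(\<lambda>h. Re (h *\<^sub>R G')) = (*) (Re G')" by (auto simp: fun_eq_iff)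
  ultimately show "((\<lambda>t. Re (G (of_real t))) has_real_derivative Re G') (at x)"
    by (simp add: has_field_derivative_def)
  have "((\<lambda>t. Im (G (of_real t))) has_derivative (\<lambda>h. Im (h *\<^sub>R G'))) (at x)"
    by (rule bounded_linear.has_derivative[OF bounded_linear_Im hd])
  moreover have "(\<lambda>h. Im (h *\<^sub>R G')) = (*) (Im G')" by (auto simp: fun_eq_iff)
  ultimately show "((\<lambda>t. Im (G (of_real t))) has_real_derivative Im G') (at x)"
    by (simp add: has_field_derivative_def)
qed

lemma main_eq: "e \<noteq> 0 \<Longrightarrow> of_real (c_fun j e) = phi_c j (of_real (lam e)) - Sg j (of_real (lam e))"
proof (induction j arbitrary: e)
  case 0
  define l where "l = lam e"
  have l: "l > 0" "l \<noteq> 1" "eta l = e" using lam_pos lam_1 eta_lam 0 by (auto simp: l_def)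
  have "phi_c 0 (of_real l) = of_real (- 1 / e)" using l by (simp add: phi_c_of_real phi_def odd_dfact_def)
  moreover have "Sg 0 (of_real l) = - inverse (of_real l - 1)" using l by (intro base_case(2)) simp
  ultimately show ?case by (simp add: l_def[symmetric] divide_inverse)
next
  case (Suc j)
  define l where "l = lam e"
  have l: "l > 0" "l \<noteq> 1" "eta l = e" using lam_pos lam_1 eta_lam Suc.prems by (auto simp: l_def)
  define G where "G = (\<lambda>z. phi_c j z - Sg j z)"
  have IH: "of_real (c_fun j y) = G (of_real (lam y))" if "y \<noteq> 0" for y
    using Suc.IH[OF that] by (simp add: G_def)
  obtain D where D: "(Sg j has_field_derivative D) (at (of_real l))" using Sg_deriv[of "of_real l" j] l by auto
  have ql: "qr (of_real l) \<notin> \<real>\<^sub>\<le>\<^sub>0"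
  proof -
    have "qr (of_real l) = of_real (2 * (l - 1 - ln l) / (l - 1)^2)"
      using l by (simp add: qr_def Ln_of_real)
    moreover have "2 * (l - 1 - ln l) / (l - 1)^2 > 0" using xlnx_pos[OF l(1,2)] l by simp
    ultimately show ?thesis by (auto simp: complex_nonpos_Reals_iff)
  qed
  have nl: "(of_real l :: complex) \<notin> \<real>\<^sub>\<le>\<^sub>0" using l by (auto simp: complex_nonpos_Reals_iff)
  have l1: "(of_real l :: complex) \<noteq> 1" using l by simp
  define G' where "G' = (of_real l - 1) / of_real l * phi_c (Suc j) (of_real l) - D"
  have dG: "(G has_field_derivative G') (at (of_real l))"
    unfolding G_def G'_def by (intro DERIV_diff phi_deriv D nl l1 ql)
  have ImG: "Im G' = 0"
  proof -
    have "((\<lambda>t. Im (G (of_real t))) has_real_derivative 0) (at l)"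
    proof (rule has_field_derivative_transform_within_open[OF DERIV_const, where S="{0<..} - {1}"])
      fix x :: real assume x: "x \<in> {0<..} - {1}"
      have "eta x \<noteq> 0" using eta_nz x by auto
      from IH[OF this] have "G (of_real x) = of_real (c_fun j (eta x))" using lam_eta x by auto
      then show "0 = Im (G (of_real x))" by simp
    qed (use l in auto)
    from DERIV_unique[OF RE_deriv(2)[OF dG] this] show ?thesis .
  qed
  have dc: "(c_fun j has_real_derivative Re G' * (e * lam e / (lam e - 1))) (at e)"
  proof (rule has_field_derivative_transform_within_open[where S="-{0}"])
    show "((\<lambda>y. Re (G (of_real (lam y)))) has_real_derivative Re G' * (e * lam e / (lam e - 1))) (at e)"
      using DERIV_chain2[OF RE_deriv(1)[OF dG[unfolded l_def]] lam_deriv[OF Suc.prems]] by (simp add: l_def)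
  next
    fix y :: real assume "y \<in> -{0}"
    then show "Re (G (of_real (lam y))) = c_fun j y" using IH[of y] by (metis ComplD Re_complex_of_real singletonI)
  qed (use Suc.prems in auto)
  hence dv: "deriv (c_fun j) e = Re G' * (e * l / (l - 1))" unfolding l_def by (rule DERIV_imp_deriv)
  have G'R: "G' = of_real (Re G')" using ImG by (simp add: complex_eq_iff)
  have lm: "l - 1 \<noteq> 0" using l by simp
  have "c_fun (Suc j) e = 1 / e * (Re G' * (e * l / (l - 1))) + stirling_gamma (Suc j) / (l - 1)"
    by (simp add: dv l_def[symmetric])
  also have "\<dots> = l / (l - 1) * Re G' + stirling_gamma (Suc j) / (l - 1)"
    using Suc.prems lm by (simp add: field_simps)
  finally have "c_fun (Suc j) e = l / (l - 1) * Re G' + stirling_gamma (Suc j) / (l - 1)" .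
  hence "of_real (c_fun (Suc j) e) = of_real l / (of_real l - 1) * G' + of_real (stirling_gamma (Suc j)) / (of_real l - 1)"
    by (subst G'R) simp
  also have "\<dots> = phi_c (Suc j) (of_real l) - (of_real l / (of_real l - 1) * D - of_real (stirling_gamma (Suc j)) / (of_real l - 1))"
  proof -
    have aux: "\<And>L P D g :: complex. L \<noteq> 0 \<Longrightarrow> L - 1 \<noteq> 0 \<Longrightarrow>
       L / (L - 1) * ((L - 1) / L * P - D) + g / (L - 1) = P - (L / (L - 1) * D - g / (L - 1))"
    proof -
      fix L P D g :: complex assume a: "L \<noteq> 0" "L - 1 \<noteq> 0"
      have c: "L / (L - 1) * ((L - 1) / L) = 1" using a by simp
      have "L / (L - 1) * ((L - 1) / L * P - D) = (L / (L - 1) * ((L - 1) / L)) * P - L / (L - 1) * D"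
        by (simp only: right_diff_distrib mult.assoc)
      also have "\<dots> = P - L / (L - 1) * D" by (simp only: c mult_1)
      finally show "L / (L - 1) * ((L - 1) / L * P - D) + g / (L - 1) = P - (L / (L - 1) * D - g / (L - 1))"
        by simp
    qed
    have "(of_real l :: complex) \<noteq> 0" "(of_real l :: complex) - 1 \<noteq> 0" using l by auto
    from aux[OF this] show ?thesis unfolding G'_def by blast
  qed
  also have "\<dots> = phi_c (Suc j) (of_real l) - Sg (Suc j) (of_real l)"
    using Srec[OF l1 D] by simp
  finally show ?case by (simp add: l_def)
qed

theorem lemmaA3:
  fixes j :: nat and l :: real
  assumes "l > 0" and "l \<noteq> 1"
  shows "complex_of_real (c_fun j (eta l))
           = complex_of_real (phi j l) - singular_part (phi_c j) 1 (complex_of_real l)"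
proof -
  have "eta l \<noteq> 0" using eta_nz assms by auto
  from main_eq[OF this, of j] show ?thesis using assms by (simp add: lam_eta phi_c_of_real)
qed

end
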